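(* Let $d\ge1$ be odd. Then for every $x\in[-1+\tfrac2d,1]$ there exists a unitary $U\in U(d)$ with $\operatorname{tr}[U\overline{U}]/d=x$, and $$\max\Big\{\frac{|\operatorname{tr}U|}{d}:\ U\in U(d),\ \frac{\operatorname{tr}[U\overline U]}{d}=x\Big\}=\Big[\tfrac12\big(1-\tfrac1d\big)\big(1-\tfrac2d+x\big)\Big]^{1/2}+\frac1d.$$
   Context: $\overline{U}$ denotes the entrywise complex conjugate of $U$. *)

theory Defs
  imports "HOL-Analysis.Analysis"
begin

definition mat_cnj :: "complex^'n^'m \<Rightarrow> complex^'n^'m"
  where "mat_cnj A = (\<chi> i j. cnj (A $ i $ j))"

definition mat_adj :: "complex^'n^'m \<Rightarrow> complex^'m^'n"
  where "mat_adj A = transpose (mat_cnj A)"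

definition unitary_mat :: "complex^'n^'n \<Rightarrow> bool"
  where "unitary_mat U \<longleftrightarrow> U ** mat_adj U = mat 1 \<and> mat_adj U ** U = mat 1"

end

theory Submission
  imports Defs
begin


definition vcnj :: "complex^'n \<Rightarrow> complex^'n" where "vcnj z = (\<chi> i. cnj (z$i))"

lemma det_uminus: "det (- A :: 'a::comm_ring_1^'n^'n) = (-1)^CARD('n) * det A"
proof -
  have "(\<chi> i. (-1) *s A$i) = -A" by (simp add: vec_eq_iff)
  moreover have "(\<chi> i. A$i) = A" by (simp add: vec_eq_iff)
  ultimately show ?thesis using det_rows_mul[of "\<lambda>i. -1" "\<lambda>i. A$i"] by simp
qed

lemma odd_antisym_det:
  fixes M :: "complex^'n^'n"
  assumes "odd CARD('n)" "transpose M = - M"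
  shows "det M = 0"
proof -
  have "det M = det (transpose M)" by simp
  also have "\<dots> = - det M" using assms by (simp add: det_uminus)
  finally show ?thesis by simp
qed

lemma ker_nonzero:
  fixes M :: "complex^'n^'n"
  assumes "det M = 0"
  shows "\<exists>z. z \<noteq> 0 \<and> M *v z = 0"
proof -
  have "\<not> inj ((*v) M)"
    using det_nz_iff_inj_gen[of "(*v) M"] assms by simp
  then obtain x y where "x \<noteq> y" "M *v x = M *v y" unfolding inj_def by blast
  then show ?thesis
    by (intro exI[of _ "x - y"]) (simp add: matrix_vector_mult_diff_distrib)
qed

lemma vcnj_mult: "mat_cnj A *v vcnj z = vcnj (A *v z)"
  by (simp add: vec_eq_iff mat_cnj_def vcnj_def matrix_vector_mult_def)

lemma vcnj_vcnj[simp]: "vcnj (vcnj z) = z" by (simp add: vec_eq_iff vcnj_def)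

lemma fixed_vec:
  fixes U :: "complex^'n^'n"
  assumes u: "unitary_mat U" and o: "odd CARD('n)"
  shows "\<exists>v. U *v vcnj v = v \<and> v \<noteq> 0"
proof -
  have "transpose (U - transpose U) = - (U - transpose U)"
    by (simp add: vec_eq_iff transpose_def)
  then have "det (U - transpose U) = 0" using odd_antisym_det o by blast
  then obtain z where z: "z \<noteq> 0" "(U - transpose U) *v z = 0" using ker_nonzero by blast
  have Uz: "U *v z = transpose U *v z" using z(2)
    by (simp add: matrix_vector_mult_diff_rdistrib)
  have key: "U *v (mat_cnj U *v vcnj z) = vcnj z"
  proof -
    have "mat_cnj U *v vcnj z = vcnj (transpose U *v z)" using Uz by (simp add: vcnj_mult)
    also have "\<dots> = mat_adj U *v vcnj z"
      by (simp add: vec_eq_iff mat_adj_def mat_cnj_def vcnj_def matrix_vector_mult_def transpose_def)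
    finally have "U *v (mat_cnj U *v vcnj z) = (U ** mat_adj U) *v vcnj z"
      by (simp add: matrix_vector_mul_assoc)
    then show ?thesis using u by (simp add: unitary_mat_def)
  qed
  define w1 where "w1 = vcnj z + U *v z"
  define w2 where "w2 = vcnj z - U *v z"
  have vc_add: "\<And>a b. vcnj (a + b) = vcnj a + vcnj b" by (simp add: vec_eq_iff vcnj_def)
  have vc_sub: "\<And>a b. vcnj (a - b) = vcnj a - vcnj b" by (simp add: vec_eq_iff vcnj_def)
  have vc_scale: "\<And>c a. vcnj (c *s a) = cnj c *s vcnj a" by (simp add: vec_eq_iff vcnj_def)
  have f1: "U *v vcnj w1 = w1"
  proof -
    have "vcnj w1 = z + mat_cnj U *v vcnj z" unfolding w1_def vc_add vcnj_mult[symmetric] by simp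
    then show ?thesis using key unfolding w1_def
      by (simp add: matrix_vector_right_distrib add.commute)
  qed
  have f2: "U *v vcnj (\<i> *s w2) = \<i> *s w2"
  proof -
    have "vcnj w2 = z - mat_cnj U *v vcnj z" unfolding w2_def vc_sub vcnj_mult[symmetric] by simp
    then have "U *v vcnj (\<i> *s w2) = (- \<i>) *s (U *v z - vcnj z)"
      using key by (simp add: vc_scale matrix_vector_mult_diff_distrib matrix_vector_mult_scaleR
           vector_scalar_commute)
    then show ?thesis unfolding w2_def by (simp add: vec_eq_iff algebra_simps)
  qed
  have "w1 \<noteq> 0 \<or> \<i> *s w2 \<noteq> 0"
  proof (rule ccontr)
    assume "\<not> ?thesis"
    then have "w1 = 0" "w2 = 0" by (auto simp: vec_eq_iff)
    then have "vcnj z + vcnj z = 0" unfolding w1_def w2_def by (simp add: vec_eq_iff algebra_simps)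
    then have "z = 0" by (simp add: vec_eq_iff vcnj_def) 
    with z show False by simp
  qed
  then show ?thesis using f1 f2 by blast
qed



lemma cs_complex:
  fixes f g :: "'a \<Rightarrow> complex"
  assumes "finite A"
  shows "(cmod (\<Sum>x\<in>A. f x * g x))^2 \<le> (\<Sum>x\<in>A. (cmod (f x))^2) * (\<Sum>x\<in>A. (cmod (g x))^2)"
proof -
  have "cmod (\<Sum>x\<in>A. f x * g x) \<le> (\<Sum>x\<in>A. cmod (f x) * cmod (g x))"
    by (metis (no_types, lifting) norm_mult norm_sum sum.cong)
  then have "(cmod (\<Sum>x\<in>A. f x * g x))^2 \<le> (\<Sum>x\<in>A. cmod (f x) * cmod (g x))^2"
    by (simp add: power_mono)
  also have "\<dots> \<le> (\<Sum>x\<in>A. (cmod (f x))^2) * (\<Sum>x\<in>A. (cmod (g x))^2)"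
    by (rule Cauchy_Schwarz_ineq_sum)
  finally show ?thesis .
qed

lemma cmod_sq_sum: "(\<Sum>x\<in>A. (cmod (f x))^2) = Re (\<Sum>x\<in>A. f x * cnj (f x))"
  by (simp add: Re_sum complex_mult_cnj cmod_def)

lemma cs_double:
  fixes f g :: "'n::finite \<Rightarrow> 'n \<Rightarrow> complex"
  shows "(cmod (\<Sum>i\<in>UNIV. \<Sum>j\<in>UNIV. f i j * g i j))^2 \<le> Re (\<Sum>i\<in>UNIV. \<Sum>j\<in>UNIV. f i j * cnj (f i j)) * Re (\<Sum>i\<in>UNIV. \<Sum>j\<in>UNIV. g i j * cnj (g i j))"
proof -
  have e: "\<And>h :: 'n \<Rightarrow> 'n \<Rightarrow> complex. (\<Sum>i\<in>UNIV. \<Sum>j\<in>UNIV. h i j) = (\<Sum>p\<in>UNIV. h (fst p) (snd p))"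
    by (simp add: sum.cartesian_product UNIV_Times_UNIV[symmetric] case_prod_beta del: UNIV_Times_UNIV)
  show ?thesis
    unfolding e cmod_sq_sum[symmetric] using cs_complex[of UNIV "\<lambda>p. f (fst p) (snd p)" "\<lambda>p. g (fst p) (snd p)"]
    by simp
qed



lemma bound_core:
  fixes u :: "'n::finite \<Rightarrow> 'n \<Rightarrow> complex" and v :: "'n \<Rightarrow> complex"
  assumes U1: "\<And>i j. (\<Sum>k\<in>UNIV. u i k * cnj (u j k)) = (if i = j then 1 else 0)"
    and U2: "\<And>i j. (\<Sum>k\<in>UNIV. cnj (u k i) * u k j) = (if i = j then 1 else 0)"
    and fx: "\<And>i. (\<Sum>j\<in>UNIV. u i j * cnj (v j)) = v i"
    and nv: "(\<Sum>i\<in>UNIV. v i * cnj (v i)) = 1"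
  shows "cmod (\<Sum>i\<in>UNIV. u i i) \<le> 1 + sqrt ((real CARD('n) - 1) * (real CARD('n) - 2 + Re (\<Sum>i\<in>UNIV. \<Sum>j\<in>UNIV. u i j * cnj (u j i))) / 2)"
proof -
  define d where "d = real CARD('n)"
  define \<tau> where "\<tau> = (\<Sum>i\<in>UNIV. \<Sum>j\<in>UNIV. u i j * cnj (u j i))"
  define b where "b i j = u i j - v i * v j" for i j
  define q where "q i j = (if i = j then 1 else 0) - v i * cnj (v j)" for i j
  have D1: "(\<Sum>i\<in>UNIV. cnj (v i) * u i j) = v j" for j
  proof -
    have "(\<Sum>i\<in>UNIV. cnj (v i) * u i j) = (\<Sum>i\<in>UNIV. (\<Sum>k\<in>UNIV. cnj (u i k) * v k) * u i j)"
      by (subst fx[symmetric]) (simp add: cnj_sum)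
    also have "\<dots> = (\<Sum>k\<in>UNIV. v k * (\<Sum>i\<in>UNIV. cnj (u i k) * u i j))"
      unfolding sum_distrib_right sum_distrib_left by (subst sum.swap) (simp add: mult_ac)
    also have "\<dots> = v j" by (simp add: U2 if_distrib cong: if_cong)
    finally show ?thesis .
  qed
  have F1: "(\<Sum>i\<in>UNIV. \<Sum>j\<in>UNIV. u i j * cnj (u i j)) = d"
    using U1 by (simp add: d_def)
  have F2: "(\<Sum>i\<in>UNIV. \<Sum>j\<in>UNIV. u i j * cnj (v i) * cnj (v j)) = 1"
  proof -
    have "(\<Sum>i\<in>UNIV. \<Sum>j\<in>UNIV. u i j * cnj (v i) * cnj (v j)) = (\<Sum>i\<in>UNIV. cnj (v i) * (\<Sum>j\<in>UNIV. u i j * cnj (v j)))"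
      by (simp add: sum_distrib_left mult_ac)
    also have "\<dots> = 1" using nv by (simp only: fx) (simp add: mult.commute)
    finally show ?thesis .
  qed
  have F3: "(\<Sum>i\<in>UNIV. \<Sum>j\<in>UNIV. v i * cnj (v i) * (v j * cnj (v j))) = 1"
    using nv by (simp add: sum_distrib_left[symmetric] sum_distrib_right[symmetric])
  have sb1: "(\<Sum>i\<in>UNIV. cnj (v i) * b i j) = 0" for j
  proof -
    have "(\<Sum>i\<in>UNIV. cnj (v i) * (v i * v j)) = v j * (\<Sum>i\<in>UNIV. v i * cnj (v i))"
      by (simp add: sum_distrib_left mult_ac)
    then show ?thesis unfolding b_def right_diff_distrib sum_subtractf using D1 nv by simp
  qed
  have sb2: "(\<Sum>i\<in>UNIV. b j i * cnj (v i)) = 0" for j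
  proof -
    have "(\<Sum>i\<in>UNIV. v j * v i * cnj (v i)) = v j * (\<Sum>i\<in>UNIV. v i * cnj (v i))"
      by (simp add: sum_distrib_left mult_ac)
    then show ?thesis unfolding b_def left_diff_distrib sum_subtractf using fx nv by simp
  qed
  define tB where "tB = (\<Sum>i\<in>UNIV. b i i)"
  have s1: "(\<Sum>i\<in>UNIV. \<Sum>j\<in>UNIV. q j i * b i j) = tB"
  proof -
    have "(\<Sum>i\<in>UNIV. \<Sum>j\<in>UNIV. q j i * b i j) = tB - (\<Sum>i\<in>UNIV. \<Sum>j\<in>UNIV. v j * (cnj (v i) * b i j))"
    proof -
      have "q j i * b i j = (if j = i then b i j else 0) - v j * (cnj (v i) * b i j)" for i j
        by (simp add: q_def algebra_simps)
      then show ?thesis by (simp add: sum_subtractf tB_def)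
    qed
    also have "(\<Sum>i\<in>UNIV. \<Sum>j\<in>UNIV. v j * (cnj (v i) * b i j)) = (\<Sum>j\<in>UNIV. v j * (\<Sum>i\<in>UNIV. cnj (v i) * b i j))"
      by (subst sum.swap) (simp add: sum_distrib_left)
    finally show ?thesis by (simp add: sb1)
  qed
  have s2: "(\<Sum>i\<in>UNIV. \<Sum>j\<in>UNIV. q j i * b j i) = tB"
  proof -
    have "(\<Sum>i\<in>UNIV. \<Sum>j\<in>UNIV. q j i * b j i) = tB - (\<Sum>i\<in>UNIV. \<Sum>j\<in>UNIV. v j * (b j i * cnj (v i)))"
    proof -
      have "q j i * b j i = (if j = i then b j i else 0) - v j * (b j i * cnj (v i))" for i j
        by (simp add: q_def algebra_simps)
      then show ?thesis by (simp add: sum_subtractf tB_def)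
    qed
    also have "(\<Sum>i\<in>UNIV. \<Sum>j\<in>UNIV. v j * (b j i * cnj (v i))) = (\<Sum>j\<in>UNIV. v j * (\<Sum>i\<in>UNIV. b j i * cnj (v i)))"
      by (subst sum.swap) (simp add: sum_distrib_left)
    finally show ?thesis by (simp add: sb2)
  qed
  have Q2: "(\<Sum>i\<in>UNIV. \<Sum>j\<in>UNIV. q j i * cnj (q j i)) = d - 1"
  proof -
    have p: "q j i * cnj (q j i) = ((if j = i then 1 else 0) - (if j = i then 2 * (v i * cnj (v i)) else 0))
        + v i * cnj (v i) * (v j * cnj (v j))" for i j
      by (auto simp: q_def algebra_simps)
    have "(\<Sum>i\<in>UNIV. \<Sum>j\<in>UNIV. q j i * cnj (q j i)) = (d - 2 * (\<Sum>i\<in>UNIV. v i * cnj (v i))) + 1"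
      unfolding p sum.distrib sum_subtractf F3 by (simp add: d_def sum_distrib_left)
    then show ?thesis using nv by simp
  qed
  have B2: "(\<Sum>i\<in>UNIV. \<Sum>j\<in>UNIV. b i j * cnj (b i j)) = d - 1"
  proof -
    have p: "b i j * cnj (b i j) = u i j * cnj (u i j) - u i j * cnj (v i) * cnj (v j)
        - cnj (u i j * cnj (v i) * cnj (v j)) + v i * cnj (v i) * (v j * cnj (v j))" for i j
      by (simp add: b_def algebra_simps)
    show ?thesis
      unfolding p sum.distrib sum_subtractf F3 F1 cnj_sum[symmetric] F2 by simp
  qed
  have B3: "(\<Sum>i\<in>UNIV. \<Sum>j\<in>UNIV. b i j * cnj (b j i)) = \<tau> - 1"
  proof -
    have p: "b i j * cnj (b j i) = u i j * cnj (u j i) - u i j * cnj (v i) * cnj (v j)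
        - cnj (u j i * cnj (v j) * cnj (v i)) + v i * cnj (v i) * (v j * cnj (v j))" for i j
      by (simp add: b_def algebra_simps)
    have sw: "(\<Sum>i\<in>UNIV. \<Sum>j\<in>UNIV. u j i * cnj (v j) * cnj (v i)) = 1"
      using F2 by (subst sum.swap) simp
    show ?thesis
      unfolding p sum.distrib sum_subtractf F3 cnj_sum[symmetric] F2 sw \<tau>_def by simp
  qed
  have BB: "(\<Sum>i\<in>UNIV. \<Sum>j\<in>UNIV. (b i j + b j i) * cnj (b i j + b j i)) = 2 * (d - 1) + (\<tau> - 1) + cnj (\<tau> - 1)"
  proof -
    have p: "(b i j + b j i) * cnj (b i j + b j i) = b i j * cnj (b i j) + b j i * cnj (b j i)
        + b i j * cnj (b j i) + cnj (b i j * cnj (b j i))" for i j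
      by (simp add: algebra_simps)
    have sw: "(\<Sum>i\<in>UNIV. \<Sum>j\<in>UNIV. b j i * cnj (b j i)) = d - 1"
      using B2 by (subst sum.swap) simp
    show ?thesis
      unfolding p sum.distrib cnj_sum[symmetric] B2 B3 sw by simp
  qed
  have "2 * tB = (\<Sum>i\<in>UNIV. \<Sum>j\<in>UNIV. q j i * (b i j + b j i))"
    using s1 s2 by (simp add: distrib_left sum.distrib)
  moreover have "(cmod (\<Sum>i\<in>UNIV. \<Sum>j\<in>UNIV. q j i * (b i j + b j i)))^2 \<le>
     Re (\<Sum>i\<in>UNIV. \<Sum>j\<in>UNIV. q j i * cnj (q j i)) * Re (\<Sum>i\<in>UNIV. \<Sum>j\<in>UNIV. (b i j + b j i) * cnj (b i j + b j i))"
    by (rule cs_double)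
  ultimately have "(cmod (2 * tB))^2 \<le> Re (d - 1) * Re (2 * (d - 1) + (\<tau> - 1) + cnj (\<tau> - 1))"
    unfolding Q2 BB by simp
  then have tBb: "(cmod tB)^2 \<le> (d - 1) * (d - 2 + Re \<tau>) / 2"
    by (simp add: norm_mult power_mult_distrib algebra_simps)
  have "cmod tB \<le> sqrt ((d - 1) * (d - 2 + Re \<tau>) / 2)"
    using tBb real_le_rsqrt by blast
  moreover have "(\<Sum>i\<in>UNIV. u i i) = (\<Sum>i\<in>UNIV. v i * v i) + tB"
    by (simp add: tB_def b_def sum_subtractf)
  moreover have "cmod (\<Sum>i\<in>UNIV. v i * v i) \<le> 1"
  proof -
    have "cmod (\<Sum>i\<in>UNIV. v i * v i) \<le> (\<Sum>i\<in>UNIV. cmod (v i * v i))" by (rule norm_sum)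
    also have "\<dots> = Re (\<Sum>i\<in>UNIV. v i * cnj (v i))"
    proof -
      have "cmod (v i * v i) = Re (v i * cnj (v i))" for i
        by (metis Re_complex_of_real complex_norm_square norm_mult of_real_power power2_eq_square)
      then show ?thesis by (simp add: Re_sum)
    qed
    finally show ?thesis using nv by simp
  qed
  ultimately show ?thesis unfolding d_def \<tau>_def
    by (smt (verit) norm_triangle_ineq)
qed



definition tau :: "nat \<Rightarrow> nat" where "tau a = (if odd a then a + 1 else a - 1)"
definition eps :: "nat \<Rightarrow> complex" where "eps a = (if odd a then 1 else -1)"
definition uu :: "complex \<Rightarrow> complex \<Rightarrow> nat \<Rightarrow> nat \<Rightarrow> complex" where
  "uu c s a b = (if a = 0 then (if b = 0 then 1 else 0)
     else (if b = a then c else if b = tau a then s * eps a else 0))"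

lemma tau_ne0: "a \<noteq> 0 \<Longrightarrow> tau a \<noteq> 0" by (auto simp: tau_def)
lemma tau_ne: "a \<noteq> 0 \<Longrightarrow> tau a \<noteq> a" by (auto simp: tau_def)
lemma tau_tau: "a \<noteq> 0 \<Longrightarrow> tau (tau a) = a" by (auto simp: tau_def)
lemma eps_tau: "a \<noteq> 0 \<Longrightarrow> eps (tau a) = - eps a" by (auto simp: tau_def eps_def)
lemma eps_sq: "eps a * eps a = 1" by (auto simp: eps_def)
lemma tau_lt: "odd d \<Longrightarrow> a < d \<Longrightarrow> a \<noteq> 0 \<Longrightarrow> tau a < d"
  by (auto simp: tau_def) (metis Suc_lessI even_Suc odd_pos)
lemma tau_eq_iff: "a \<noteq> 0 \<Longrightarrow> m \<noteq> 0 \<Longrightarrow> (a = tau m) = (m = tau a)"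
  using tau_tau by metis

lemma row_sum:
  assumes "odd d" "a < d" "a \<noteq> 0"
  shows "(\<Sum>m\<in>{0..<d}. uu c s a m * X m) = c * X a + s * eps a * X (tau a)"
proof -
  have "uu c s a m * X m = (if m = a then c * X a else 0) + (if m = tau a then s * eps a * X (tau a) else 0)" for m
    using assms tau_ne[of a] by (auto simp: uu_def)
  then show ?thesis using assms tau_lt[of d a] by (simp add: sum.distrib)
qed

lemma row_sum0:
  assumes "0 < d"
  shows "(\<Sum>m\<in>{0..<d}. uu c s 0 m * X m) = X 0"
proof -
  have "uu c s 0 m * X m = (if m = 0 then X 0 else 0)" for m by (auto simp: uu_def)
  then show ?thesis using assms by simp
qed

lemma uu_real: "cnj c = c \<Longrightarrow> cnj s = s \<Longrightarrow> cnj (uu c s a b) = uu c s a b"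
  by (auto simp: uu_def eps_def)

lemma uu_orth:
  assumes "odd d" "a < d" "b < d" "c * c + s * s = 1"
  shows "(\<Sum>m\<in>{0..<d}. uu c s a m * uu c s b m) = (if a = b then 1 else 0)"
proof (cases "a = 0")
  case True
  have "(\<Sum>m\<in>{0..<d}. uu c s 0 m * uu c s b m) = uu c s b 0"
    by (rule row_sum0) (use assms in auto)
  then show ?thesis using assms True by (auto simp: uu_def tau_ne0)
next
  case False
  then have "(\<Sum>m\<in>{0..<d}. uu c s a m * uu c s b m) = c * uu c s b a + s * eps a * uu c s b (tau a)"
    using assms by (intro row_sum) auto
  also have "\<dots> = (if a = b then 1 else 0)"
    using False assms tau_ne[of a] tau_ne0[of a] tau_tau[of a] tau_eq_iff[of a b] eps_tau[of a] eps_sq[of a] tau_tau[of b] tau_ne[of b]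
    by (auto simp: uu_def algebra_simps)
  finally show ?thesis .
qed

lemma uu_trace2:
  assumes "odd d" "a < d"
  shows "(\<Sum>m\<in>{0..<d}. uu c s a m * uu c s m a) = (if a = 0 then 1 else c * c - s * s)"
proof (cases "a = 0")
  case True
  have "(\<Sum>m\<in>{0..<d}. uu c s 0 m * uu c s m 0) = uu c s 0 0"
    by (rule row_sum0) (use assms in auto)
  then show ?thesis using True by (auto simp: uu_def)
next
  case False
  then have "(\<Sum>m\<in>{0..<d}. uu c s a m * uu c s m a) = c * uu c s a a + s * eps a * uu c s (tau a) a"
    using assms by (intro row_sum) auto
  also have "\<dots> = c * c - s * s"
    using False assms tau_ne[of a] tau_ne0[of a] tau_tau[of a] eps_tau[of a] eps_sq[of a]
    by (auto simp: uu_def algebra_simps)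
  finally show ?thesis using False by simp
qed

lemma sum_split0:
  fixes d :: nat
  assumes "0 < d"
  shows "(\<Sum>a\<in>{0..<d}. f a) = f 0 + (\<Sum>a\<in>{1..<d}. f a)"
  using sum.atLeast_Suc_lessThan[OF assms, of f] by simp

lemma construct:
  fixes c s :: complex
  assumes o: "odd CARD('n::finite)" and cs: "c * c + s * s = 1" and rc: "cnj c = c" and rs: "cnj s = s"
  shows "\<exists>U :: complex^'n^'n. unitary_mat U \<and>
     trace (U ** mat_cnj U) = 1 + of_nat (CARD('n) - 1) * (c * c - s * s) \<and>
     trace U = 1 + of_nat (CARD('n) - 1) * c"
proof -
  let ?d = "CARD('n)"
  obtain g :: "'n \<Rightarrow> nat" where g: "bij_betw g UNIV {0..<?d}"
    using ex_bij_betw_finite_nat[of "UNIV :: 'n set"] by auto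
  have reidx: "(\<Sum>k\<in>UNIV. F (g k)) = (\<Sum>m\<in>{0..<?d}. F m)" for F :: "nat \<Rightarrow> complex"
    using sum.reindex_bij_betw[OF g, of F] by simp
  have gl: "g i < ?d" for i using g by (auto simp: bij_betw_def)
  have ginj: "g i = g j \<longleftrightarrow> i = j" for i j using g by (auto simp: bij_betw_def inj_on_def)
  define U :: "complex^'n^'n" where "U = (\<chi> i j. uu c s (g i) (g j))"
  have cU: "mat_cnj U = U" by (simp add: U_def mat_cnj_def vec_eq_iff uu_real rc rs)
  have "U ** mat_adj U = mat 1"
  proof -
    have "(U ** mat_adj U) $ i $ j = (mat 1 :: complex^'n^'n) $ i $ j" for i j
    proof -
      have "(U ** mat_adj U) $ i $ j = (\<Sum>k\<in>UNIV. uu c s (g i) (g k) * uu c s (g j) (g k))"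
        by (simp add: matrix_matrix_mult_def mat_adj_def cU transpose_def) (simp add: U_def)
      also have "\<dots> = (\<Sum>m\<in>{0..<?d}. uu c s (g i) m * uu c s (g j) m)"
        by (rule reidx)
      also have "\<dots> = (if g i = g j then 1 else 0)"
        using o gl cs by (intro uu_orth) auto
      finally show ?thesis by (simp add: mat_def ginj)
    qed
    then show ?thesis by (simp add: vec_eq_iff)
  qed
  then have un: "unitary_mat U" unfolding unitary_mat_def using matrix_left_right_inverse by blast
  have pos: "0 < ?d" by simp
  have "trace (U ** mat_cnj U) = (\<Sum>i\<in>UNIV. \<Sum>k\<in>UNIV. uu c s (g i) (g k) * uu c s (g k) (g i))"
    by (simp add: trace_def matrix_matrix_mult_def cU) (simp add: U_def)
  also have "\<dots> = (\<Sum>a\<in>{0..<?d}. \<Sum>m\<in>{0..<?d}. uu c s a m * uu c s m a)"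
  proof -
    have inn: "(\<Sum>k\<in>UNIV. uu c s a (g k) * uu c s (g k) a) = (\<Sum>m\<in>{0..<?d}. uu c s a m * uu c s m a)" for a
      by (rule reidx)
    show ?thesis unfolding inn by (rule reidx)
  qed
  also have "\<dots> = (\<Sum>a\<in>{0..<?d}. if a = 0 then 1 else c * c - s * s)"
    using o uu_trace2 by (intro sum.cong) auto
  also have "\<dots> = 1 + of_nat (?d - 1) * (c * c - s * s)"
    using pos by (subst sum_split0) auto
  finally have t1: "trace (U ** mat_cnj U) = 1 + of_nat (?d - 1) * (c * c - s * s)" .
  have "trace U = (\<Sum>i\<in>UNIV. uu c s (g i) (g i))" by (simp add: trace_def U_def)
  also have "\<dots> = (\<Sum>a\<in>{0..<?d}. uu c s a a)" by (rule reidx)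
  also have "\<dots> = (\<Sum>a\<in>{0..<?d}. if a = 0 then 1 else c)"
    by (intro sum.cong) (auto simp: uu_def)
  also have "\<dots> = 1 + of_nat (?d - 1) * c"
    using pos by (subst sum_split0) auto
  finally show ?thesis using un t1 by blast
qed



lemma ub:
  fixes U :: "complex^'n^'n"
  assumes u: "unitary_mat U" and o: "odd CARD('n)"
  shows "cmod (trace U) \<le> 1 + sqrt ((real CARD('n) - 1) * (real CARD('n) - 2 + Re (trace (U ** mat_cnj U))) / 2)"
proof -
  obtain v where v: "U *v vcnj v = v" "v \<noteq> 0" using fixed_vec[OF u o] by blast
  define r where "r = sqrt (\<Sum>i\<in>UNIV. (cmod (v$i))^2)"
  have sp: "(\<Sum>i\<in>UNIV. (cmod (v$i))^2) > 0"
  proof -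
    obtain i where "v$i \<noteq> 0" using v(2) by (auto simp: vec_eq_iff)
    then have "(cmod (v$i))^2 > 0" by simp
    then show ?thesis by (intro sum_pos2[where i=i]) auto
  qed
  then have rp: "r > 0" and r2: "r^2 = (\<Sum>i\<in>UNIV. (cmod (v$i))^2)" by (auto simp: r_def)
  define w where "w = of_real (1 / r) *s v"
  have fxw: "U *v vcnj w = w"
  proof -
    have "vcnj w = of_real (1/r) *s vcnj v" by (simp add: w_def vcnj_def vec_eq_iff)
    then show ?thesis using v(1) by (simp add: w_def matrix_vector_mult_scaleR vector_scalar_commute)
  qed
  have nw: "(\<Sum>i\<in>UNIV. w$i * cnj (w$i)) = 1"
  proof -
    have "w$i * cnj (w$i) = of_real ((cmod (v$i))^2 / r^2)" for i
      by (simp add: w_def complex_norm_square[symmetric] power2_eq_square)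
    then have eq: "(\<Sum>i\<in>UNIV. w$i * cnj (w$i)) = of_real ((\<Sum>i\<in>UNIV. (cmod (v$i))^2) / r^2)"
      by (simp add: sum_divide_distrib)
    have q: "(\<Sum>i\<in>UNIV. (cmod (v$i))^2) / r^2 = 1" using r2 sp by simp
    show ?thesis unfolding eq q by simp
  qed
  have U1: "(\<Sum>k\<in>UNIV. U$i$k * cnj (U$j$k)) = (if i = j then 1 else 0)" for i j
  proof -
    have "(U ** mat_adj U)$i$j = (\<Sum>k\<in>UNIV. U$i$k * cnj (U$j$k))"
      by (simp add: matrix_matrix_mult_def mat_adj_def mat_cnj_def transpose_def)
    then show ?thesis using u by (simp add: unitary_mat_def mat_def)
  qed
  have U2: "(\<Sum>k\<in>UNIV. cnj (U$k$i) * U$k$j) = (if i = j then 1 else 0)" for i j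
  proof -
    have "(mat_adj U ** U)$i$j = (\<Sum>k\<in>UNIV. cnj (U$k$i) * U$k$j)"
      by (simp add: matrix_matrix_mult_def mat_adj_def mat_cnj_def transpose_def)
    then show ?thesis using u by (simp add: unitary_mat_def mat_def)
  qed
  have fx: "(\<Sum>j\<in>UNIV. U$i$j * cnj (w$j)) = w$i" for i
  proof -
    have "(U *v vcnj w)$i = (\<Sum>j\<in>UNIV. U$i$j * cnj (w$j))"
      by (simp add: matrix_vector_mult_def vcnj_def)
    then show ?thesis using fxw by simp
  qed
  have tr: "trace U = (\<Sum>i\<in>UNIV. U$i$i)" by (simp add: trace_def)
  have tr2: "trace (U ** mat_cnj U) = (\<Sum>i\<in>UNIV. \<Sum>j\<in>UNIV. U$i$j * cnj (U$j$i))"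
    by (simp add: trace_def matrix_matrix_mult_def mat_cnj_def)
  show ?thesis unfolding tr tr2
    by (rule bound_core[of "\<lambda>i j. U$i$j" "\<lambda>i. w$i"]) (use U1 U2 fx nw in auto)
qed



theorem proposition5:
  fixes x :: real
  defines "d \<equiv> CARD('n::finite)"
  assumes "odd d"
    and "-1 + 2 / real d \<le> x" and "x \<le> 1"
  shows "(\<exists>U :: complex^'n^'n. unitary_mat U \<and>
            trace (U ** mat_cnj U) / of_nat d = complex_of_real x)
       \<and> (\<exists>U :: complex^'n^'n. unitary_mat U \<and>
            trace (U ** mat_cnj U) / of_nat d = complex_of_real x \<and>
            cmod (trace U) / real d
              = sqrt ((1/2) * (1 - 1 / real d) * (1 - 2 / real d + x)) + 1 / real d)
       \<and> (\<forall>U :: complex^'n^'n. unitary_mat U \<and>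
            trace (U ** mat_cnj U) / of_nat d = complex_of_real x \<longrightarrow>
            cmod (trace U) / real d
              \<le> sqrt ((1/2) * (1 - 1 / real d) * (1 - 2 / real d + x)) + 1 / real d)"
proof -
  define D where "D = real d"
  have D1: "D \<ge> 1" unfolding D_def d_def by (simp add: Suc_leI)
  have dpos: "D > 0" using D1 by simp
  have lo: "D - 2 + D * x \<ge> 0"
  proof -
    have "D * (-1 + 2 / D) \<le> D * x" using assms(3) dpos unfolding D_def by (intro mult_left_mono) auto
    moreover have "D * (-1 + 2 / D) = 2 - D" using dpos by (simp add: field_simps)
    ultimately show ?thesis by linarith
  qed
  have hi: "D * x \<le> D" using assms(4) dpos by simp
  have sq_eq: "sqrt ((1/2) * (1 - 1 / D) * (1 - 2 / D + x)) = sqrt ((D - 1) * (D - 2 + D * x) / 2) / D"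
  proof -
    have "(1/2) * (1 - 1 / D) * (1 - 2 / D + x) = ((D - 1) * (D - 2 + D * x) / 2) / D^2"
      using dpos by (simp add: field_simps power2_eq_square)
    then have "sqrt ((1/2) * (1 - 1 / D) * (1 - 2 / D + x)) = sqrt (((D - 1) * (D - 2 + D * x) / 2) / D^2)"
      by simp
    also have "\<dots> = sqrt ((D - 1) * (D - 2 + D * x) / 2) / sqrt (D^2)" by (rule real_sqrt_divide)
    also have "sqrt (D^2) = D" using dpos by simp
    finally show ?thesis .
  qed
  have UB: "cmod (trace U) / real d \<le> sqrt ((1/2) * (1 - 1 / real d) * (1 - 2 / real d + x)) + 1 / real d"
    if u: "unitary_mat U" and t: "trace (U ** mat_cnj U) / of_nat d = complex_of_real x" for U :: "complex^'n^'n"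
  proof -
    have "trace (U ** mat_cnj U) = of_real (D * x)"
      using t dpos unfolding D_def by (simp add: field_simps)
    then have "Re (trace (U ** mat_cnj U)) = D * x" by simp
    moreover have "cmod (trace U) \<le> 1 + sqrt ((D - 1) * (D - 2 + Re (trace (U ** mat_cnj U))) / 2)"
      using ub[OF u] assms(2) unfolding D_def d_def by simp
    ultimately have "cmod (trace U) \<le> 1 + sqrt ((D - 1) * (D - 2 + D * x) / 2)" by simp
    then have "cmod (trace U) / D \<le> (1 + sqrt ((D - 1) * (D - 2 + D * x) / 2)) / D"
      using dpos by (simp add: divide_right_mono)
    then show ?thesis unfolding D_def[symmetric] sq_eq by (simp add: add_divide_distrib)
  qed
  define cr where "cr = sqrt ((D - 2 + D * x) / (2 * (D - 1)))"
  have cr0: "cr \<ge> 0" unfolding cr_def using lo D1 by simp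
  have cr2: "cr^2 = (D - 2 + D * x) / (2 * (D - 1))" unfolding cr_def using lo D1 by simp
  have cr1: "cr^2 \<le> 1"
  proof (cases "D = 1")
    case True then show ?thesis using cr2 by simp
  next
    case False
    then have "D - 1 > 0" using D1 by simp
    then show ?thesis unfolding cr2 using hi by (simp add: field_simps)
  qed
  define sr where "sr = sqrt (1 - cr^2)"
  have sr2: "sr^2 = 1 - cr^2" unfolding sr_def using cr1 by simp
  obtain U :: "complex^'n^'n" where U: "unitary_mat U"
    "trace (U ** mat_cnj U) = 1 + of_nat (d - 1) * (of_real cr * of_real cr - of_real sr * of_real sr)"
    "trace U = 1 + of_nat (d - 1) * of_real cr"
    using construct[of "of_real cr" "of_real sr"] assms(2) sr2 unfolding d_def
    by (auto simp: power2_eq_square simp flip: of_real_mult of_real_add)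
  have Dm: "real (d - 1) = D - 1" using D1 unfolding D_def by (simp add: of_nat_diff)
  have key1: "1 + (D - 1) * (cr * cr - sr * sr) = D * x"
  proof (cases "D = 1")
    case True
    then have "x = 1" using assms(3,4) unfolding D_def by simp
    then show ?thesis using True by simp
  next
    case False
    then have "D - 1 > 0" using D1 by simp
    have a: "sr * sr = 1 - cr * cr" using sr2 by (simp add: power2_eq_square)
    have b: "(D - 1) * (cr * cr) = (D - 2 + D * x) / 2"
      using cr2 \<open>D - 1 > 0\<close> by (simp add: power2_eq_square field_simps)
    have "1 + (D - 1) * (cr * cr - sr * sr) = 1 + 2 * ((D - 1) * (cr * cr)) - (D - 1)"
      by (simp add: a algebra_simps)
    also have "\<dots> = 1 + 2 * ((D - 2 + D * x) / 2) - (D - 1)" by (simp only: b)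
    also have "\<dots> = D * x" by (simp add: field_simps)
    finally show ?thesis .
  qed
  have Dm': "(of_nat (d - 1) :: complex) = of_real (D - 1)" using Dm by (metis of_real_of_nat_eq)
  have t1: "trace (U ** mat_cnj U) = of_real (D * x)"
    unfolding U(2) key1[symmetric] Dm' by simp
  have t1': "trace (U ** mat_cnj U) / of_nat d = complex_of_real x"
    unfolding t1 using dpos unfolding D_def by (simp add: field_simps)
  have trU: "cmod (trace U) = 1 + (D - 1) * cr"
  proof -
    have "trace U = of_real (1 + (D - 1) * cr)" unfolding U(3) Dm' by simp
    then have "cmod (trace U) = \<bar>1 + (D - 1) * cr\<bar>" by (simp only: norm_of_real)
    then show ?thesis using D1 cr0 by simp
  qed
  have key2: "sqrt ((D - 1) * (D - 2 + D * x) / 2) = (D - 1) * cr"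
  proof (rule real_sqrt_unique)
    show "0 \<le> (D - 1) * cr" using D1 cr0 by simp
    show "((D - 1) * cr)^2 = (D - 1) * (D - 2 + D * x) / 2"
    proof (cases "D = 1")
      case True then show ?thesis by simp
    next
      case False
      then have "D - 1 > 0" using D1 by simp
      have b: "(D - 1) * (cr * cr) = (D - 2 + D * x) / 2"
        using cr2 \<open>D - 1 > 0\<close> by (simp add: power2_eq_square field_simps)
      have "((D - 1) * cr)^2 = (D - 1) * ((D - 1) * (cr * cr))" by (simp add: power2_eq_square algebra_simps)
      then show ?thesis by (simp only: b)
    qed
  qed
  have EQ: "cmod (trace U) / real d = sqrt ((1/2) * (1 - 1 / real d) * (1 - 2 / real d + x)) + 1 / real d"
    unfolding D_def[symmetric] sq_eq key2 trU using dpos by (simp add: field_simps)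
  show ?thesis using U(1) t1' EQ UB by blast
qed

end
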